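(* In the setting described in the context, assume $\Delta_1>0$. Let $\beta_t$ ($t\ge1$) be the policy computed by LPSM at slot $t$, and let $Z=\inf\{z\ge 1:\ \beta_t=\beta^*\text{ for all }t\ge z\}$ (with $\inf\emptyset=\infty$) be the first slot from which on LPSM never fails to find the optimal policy. Then $\mathbb{E}[Z]<\infty$.
   Context: Setting (MDP with unknown mean rewards). $\mathcal{S}$ is a finite state space and $\mathcal{A}$ a finite action set, with $S=|\mathcal{S}|$, $A=|\mathcal{A}|$; for each $s\in\mathcal{S}$ a nonempty set $\mathcal{A}_s\subseteq\mathcal{A}$ of allowed actions is given. The transition probabilities $P(s'\mid s,a)$ are known to the agent. The MDP is ergodic: every deterministic stationary policy $\beta:\mathcal{S}\to\mathcal{A}$ with $\beta(s)\in\mathcal{A}_s$ induces an irreducible aperiodic Markov chain; let $\pi_\beta$ be its stationary distribution. Let $X_0,X_1,\dots$ be i.i.d. random variables with support $\mathcal{X}$. If at slot $t$ the state is $s_t$ and action $a_t\in\mathcal{A}_{s_t}$ is taken, the agent receives reward $r_t=f(s_t,a_t,X_t)$ with $f$ known to the agent, the next state is drawn from $P(\cdot\mid s_t,a_t)$, and after slot $t$ the agent learns the realization $x_t$ of $X_t$. Let $\mu(s,a)=\mathbb{E}[f(s,a,X)]$, $\mathbf{M}$ the matrix of the $\mu(s,a)$, and $\rho(\beta,\Theta)=\sum_s\pi_\beta(s)\Theta(s,\beta(s))$ for a matrix $\Theta$. Let $\beta^*$ be an optimal deterministic stationary policy, $\rho^*=\rho(\beta^*,\mathbf{M})=\max_\beta\rho(\beta,\mathbf{M})$,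 $\Delta_1=\rho^*-\max_{\beta\ne\beta^*}\rho(\beta,\mathbf{M})$. Assume $\sup_{x\in\mathcal{X}}f(s,a,x)-\inf_{x\in\mathcal{X}}f(s,a,x)$ is finite for all $(s,a)$. LP$(\Theta)$: maximize $\sum_{s}\sum_{a\in\mathcal{A}_s}\pi(s,a)\Theta(s,a)$ subject to $\pi(s,a)\ge 0$, $\sum_s\sum_{a\in\mathcal{A}_s}\pi(s,a)=1$, and $\sum_{a\in\mathcal{A}_{s'}}\pi(s',a)=\sum_s\sum_{a\in\mathcal{A}_s}\pi(s,a)P(s'\mid s,a)$ for all $s'$. Algorithm LPSM: at slot $0$ play any allowed action. At each slot $n\ge1$, let $\Theta_n(s,a)=\frac1n\sum_{k=0}^{n-1}f(s,a,x_k)$, solve LP$(\Theta_n)$ to obtain $\pi_{(n)}$, define $\beta_n(s)\in\arg\max_{a\in\mathcal{A}_s}\pi_{(n)}(s,a)$, and play $\beta_n(s_n)$. *)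

theory Defs
  imports "HOL-Probability.Probability"
begin

definition admissible :: "('s \<Rightarrow> 'a set) \<Rightarrow> ('s \<Rightarrow> 'a) \<Rightarrow> bool" where
  "admissible Acts \<beta> \<longleftrightarrow> (\<forall>s. \<beta> s \<in> Acts s)"

definition pol_mat :: "('s \<Rightarrow> 'a \<Rightarrow> 's \<Rightarrow> real) \<Rightarrow> ('s \<Rightarrow> 'a) \<Rightarrow> 's \<Rightarrow> 's \<Rightarrow> real" where
  "pol_mat P \<beta> s s' = P s (\<beta> s) s'"

fun mat_pow :: "('s::finite \<Rightarrow> 's \<Rightarrow> real) \<Rightarrow> nat \<Rightarrow> 's \<Rightarrow> 's \<Rightarrow> real" where
  "mat_pow Q 0 i j = (if i = j then 1 else 0)"
| "mat_pow Q (Suc n) i j = (\<Sum>k\<in>UNIV. mat_pow Q n i k * Q k j)"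

definition irreducible_chain :: "('s::finite \<Rightarrow> 's \<Rightarrow> real) \<Rightarrow> bool" where
  "irreducible_chain Q \<longleftrightarrow> (\<forall>i j. \<exists>n>0. mat_pow Q n i j > 0)"

definition period :: "('s::finite \<Rightarrow> 's \<Rightarrow> real) \<Rightarrow> 's \<Rightarrow> nat" where
  "period Q i = Gcd {n. n > 0 \<and> mat_pow Q n i i > 0}"

definition aperiodic_chain :: "('s::finite \<Rightarrow> 's \<Rightarrow> real) \<Rightarrow> bool" where
  "aperiodic_chain Q \<longleftrightarrow> (\<forall>i. period Q i = 1)"

definition is_stationary :: "('s::finite \<Rightarrow> 's \<Rightarrow> real) \<Rightarrow> ('s \<Rightarrow> real) \<Rightarrow> bool" where
  "is_stationary Q p \<longleftrightarrow> (\<forall>s. p s \<ge> 0) \<and> (\<Sum>s\<in>UNIV. p s) = 1 \<and>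
     (\<forall>s'. p s' = (\<Sum>s\<in>UNIV. p s * Q s s'))"

text \<open>The stationary distribution (unique for irreducible chains).\<close>
definition stat_dist :: "('s::finite \<Rightarrow> 's \<Rightarrow> real) \<Rightarrow> 's \<Rightarrow> real" where
  "stat_dist Q = (THE p. is_stationary Q p)"

definition rho :: "('s::finite \<Rightarrow> 'a \<Rightarrow> 's \<Rightarrow> real) \<Rightarrow> ('s \<Rightarrow> 'a) \<Rightarrow> ('s \<Rightarrow> 'a \<Rightarrow> real) \<Rightarrow> real" where
  "rho P \<beta> \<Theta> = (\<Sum>s\<in>UNIV. stat_dist (pol_mat P \<beta>) s * \<Theta> s (\<beta> s))"

text \<open>The linear program LP(\<Theta>); variables \<pi>(s,a) for a \<in> A_s (other values ignored).\<close>
definition lp_feasible :: "('s::finite \<Rightarrow> 'a set) \<Rightarrow> ('s \<Rightarrow> 'a \<Rightarrow> 's \<Rightarrow> real) \<Rightarrow> ('s \<Rightarrow> 'a \<Rightarrow> real) \<Rightarrow> bool" where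
  "lp_feasible Acts P \<pi> \<longleftrightarrow>
     (\<forall>s. \<forall>a\<in>Acts s. \<pi> s a \<ge> 0) \<and>
     (\<Sum>s\<in>UNIV. \<Sum>a\<in>Acts s. \<pi> s a) = 1 \<and>
     (\<forall>s'. (\<Sum>a\<in>Acts s'. \<pi> s' a) = (\<Sum>s\<in>UNIV. \<Sum>a\<in>Acts s. \<pi> s a * P s a s'))"

definition lp_obj :: "('s::finite \<Rightarrow> 'a set) \<Rightarrow> ('s \<Rightarrow> 'a \<Rightarrow> real) \<Rightarrow> ('s \<Rightarrow> 'a \<Rightarrow> real) \<Rightarrow> real" where
  "lp_obj Acts \<Theta> \<pi> = (\<Sum>s\<in>UNIV. \<Sum>a\<in>Acts s. \<pi> s a * \<Theta> s a)"

definition lp_optimal :: "('s::finite \<Rightarrow> 'a set) \<Rightarrow> ('s \<Rightarrow> 'a \<Rightarrow> 's \<Rightarrow> real) \<Rightarrow> ('s \<Rightarrow> 'a \<Rightarrow> real) \<Rightarrow> ('s \<Rightarrow> 'a \<Rightarrow> real) \<Rightarrow> bool" where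
  "lp_optimal Acts P \<Theta> \<pi> \<longleftrightarrow> lp_feasible Acts P \<pi> \<and>
     (\<forall>\<pi>'. lp_feasible Acts P \<pi>' \<longrightarrow> lp_obj Acts \<Theta> \<pi>' \<le> lp_obj Acts \<Theta> \<pi>)"

definition emp_mean :: "('s \<Rightarrow> 'a \<Rightarrow> 'x \<Rightarrow> real) \<Rightarrow> (nat \<Rightarrow> 'x) \<Rightarrow> nat \<Rightarrow> 's \<Rightarrow> 'a \<Rightarrow> real" where
  "emp_mean f xs n s a = (1 / real n) * (\<Sum>k<n. f s a (xs k))"

definition lpsm_choice :: "('s::finite \<Rightarrow> 'a set) \<Rightarrow> ('s \<Rightarrow> 'a \<Rightarrow> 's \<Rightarrow> real) \<Rightarrow> ('s \<Rightarrow> 'a \<Rightarrow> real) \<Rightarrow> ('s \<Rightarrow> 'a) \<Rightarrow> bool" where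
  "lpsm_choice Acts P \<Theta> \<beta> \<longleftrightarrow> (\<exists>\<pi>. lp_optimal Acts P \<Theta> \<pi> \<and>
     (\<forall>s. \<beta> s \<in> Acts s \<and> (\<forall>a\<in>Acts s. \<pi> s a \<le> \<pi> s (\<beta> s))))"

definition first_stable :: "(nat \<Rightarrow> 's \<Rightarrow> 'a) \<Rightarrow> ('s \<Rightarrow> 'a) \<Rightarrow> ennreal" where
  "first_stable bs bstar = (INF z\<in>{z::nat. z \<ge> 1 \<and> (\<forall>t\<ge>z. bs t = bstar)}. ennreal (real z))"

end

theory Submission
  imports Defs
begin

definition stoch :: "('s::finite \<Rightarrow> 's \<Rightarrow> real) \<Rightarrow> bool" where
  "stoch Q \<longleftrightarrow> (\<forall>i j. Q i j \<ge> 0) \<and> (\<forall>i. (\<Sum>j\<in>UNIV. Q i j) = 1)"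

lemma mat_pow_nonneg:
  assumes "stoch Q" shows "mat_pow Q n i j \<ge> 0"
  using assms by (induction n arbitrary: j) (auto simp: stoch_def intro!: sum_nonneg mult_nonneg_nonneg)

lemma mat_pow_pos_step:
  assumes "stoch Q" "mat_pow Q (Suc n) i j > 0"
  shows "\<exists>k. mat_pow Q n i k > 0 \<and> Q k j > 0"
proof (rule ccontr)
  assume "\<not> ?thesis"
  then have "\<forall>k. mat_pow Q n i k * Q k j = 0"
    using mat_pow_nonneg[OF assms(1)] assms(1) unfolding stoch_def
    by (metis less_eq_real_def mult_eq_0_iff)
  then have "(\<Sum>k\<in>UNIV. mat_pow Q n i k * Q k j) = 0" by (intro sum.neutral) auto
  then show False using assms(2) by simp
qed

lemma harmonic_const:
  assumes st: "stoch Q" and irr: "irreducible_chain Q"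
    and h: "\<And>i. h i = (\<Sum>j\<in>UNIV. Q i j * h j)"
  shows "h i = h j"
proof -
  define m where "m = Max (range h)"
  have "m \<in> range h" unfolding m_def by (rule Max_in) auto
  then obtain i0 where i0: "h i0 = m" by auto
  have le: "h k \<le> m" for k unfolding m_def by simp
  have step: "h k = m \<Longrightarrow> Q k l > 0 \<Longrightarrow> h l = m" for k l
  proof -
    assume a: "h k = m" "Q k l > 0"
    have e1: "(\<Sum>j\<in>UNIV. Q k j * (m - h j)) = m * (\<Sum>j\<in>UNIV. Q k j) - (\<Sum>j\<in>UNIV. Q k j * h j)"
      by (simp add: algebra_simps sum_subtractf sum_distrib_left)
    have hk: "(\<Sum>j\<in>UNIV. Q k j * h j) = m" using h[of k] a(1) by linarith
    have "(\<Sum>j\<in>UNIV. Q k j * (m - h j)) = 0" using e1 hk st by (simp add: stoch_def)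
    then have "\<forall>j\<in>UNIV. Q k j * (m - h j) = 0"
      by (subst (asm) sum_nonneg_eq_0_iff) (use st le in \<open>auto simp: stoch_def\<close>)
    then show "h l = m" using a(2) by force
  qed
  have reach: "mat_pow Q n i0 j > 0 \<Longrightarrow> h j = m" for n j
  proof (induction n arbitrary: j)
    case 0 then show ?case using i0 by (auto split: if_splits)
  next
    case (Suc n)
    then obtain k where "mat_pow Q n i0 k > 0" "Q k j > 0" using mat_pow_pos_step[OF st] by blast
    then show ?case using Suc step by blast
  qed
  have "h x = m" for x using irr reach unfolding irreducible_chain_def by blast
  then show ?thesis by simp
qed

lemma stat_nn: "is_stationary Q x \<Longrightarrow> x s \<ge> 0"
  unfolding is_stationary_def by blast
lemma stat_sum: "is_stationary Q x \<Longrightarrow> (\<Sum>s\<in>UNIV. x s) = 1"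
  unfolding is_stationary_def by blast
lemma stat_eq: "is_stationary Q x \<Longrightarrow> x s' = (\<Sum>s\<in>UNIV. x s * Q s s')"
  unfolding is_stationary_def by blast

lemma stationary_pow:
  assumes "is_stationary Q x"
  shows "x j = (\<Sum>i\<in>UNIV. x i * mat_pow Q n i j)"
proof (induction n arbitrary: j)
  case 0
  have "(\<Sum>i\<in>UNIV. x i * mat_pow Q 0 i j) = (\<Sum>i\<in>UNIV. if i = j then x i else 0)"
    by (rule sum.cong) auto
  then show ?case by simp
next
  case (Suc n)
  have "(\<Sum>i\<in>UNIV. x i * mat_pow Q (Suc n) i j) = (\<Sum>k\<in>UNIV. (\<Sum>i\<in>UNIV. x i * mat_pow Q n i k) * Q k j)"
    by (simp add: sum_distrib_left sum_distrib_right mult.assoc) (rule sum.swap)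
  also have "\<dots> = (\<Sum>k\<in>UNIV. x k * Q k j)" by (simp only: Suc[symmetric])
  also have "\<dots> = x j" by (rule stat_eq[OF assms, symmetric])
  finally show ?case by (rule sym)
qed

lemma stationary_pos:
  assumes st: "stoch Q" and irr: "irreducible_chain Q" and x: "is_stationary Q x"
  shows "x j > 0"
proof -
  have nn: "\<And>s. x s \<ge> 0" using x unfolding is_stationary_def by blast
  have s1: "(\<Sum>s\<in>UNIV. x s) = 1" using x unfolding is_stationary_def by blast
  have "\<exists>i. x i > 0"
  proof (rule ccontr)
    assume "\<not> (\<exists>i. x i > 0)"
    then have "\<forall>s. x s = 0" by (metis nn antisym not_less)
    then show False using s1 by simp
  qed
  then obtain i where xi: "x i > 0" by blast
  obtain n where n: "mat_pow Q n i j > 0" using irr unfolding irreducible_chain_def by blast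
  have "x i * mat_pow Q n i j \<le> (\<Sum>k\<in>UNIV. x k * mat_pow Q n k j)"
    by (rule member_le_sum) (auto intro!: mult_nonneg_nonneg nn mat_pow_nonneg[OF st])
  moreover have "x i * mat_pow Q n i j > 0" using xi n by simp
  moreover have "x j = (\<Sum>k\<in>UNIV. x k * mat_pow Q n k j)" by (rule stationary_pow[OF x])
  ultimately show ?thesis by linarith
qed


definition Lm :: "('s::finite \<Rightarrow> 's \<Rightarrow> real) \<Rightarrow> real^'s^'s" where
  "Lm Q = (\<chi> i. \<chi> j. (if i = j then 1 else 0) - Q i j)"

lemma Lm_entry: "Lm Q $ i $ j = (if i = j then 1 else 0) - Q i j"
  unfolding Lm_def by simp

lemma Lm_mult: "(Lm Q *v v) $ i = v $ i - (\<Sum>j\<in>UNIV. Q i j * v $ j)"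
proof -
  have "(Lm Q *v v) $ i = (\<Sum>j\<in>UNIV. Lm Q $ i $ j * v $ j)"
    by (simp only: matrix_vector_mult_def vec_lambda_beta)
  also have "\<dots> = (\<Sum>j\<in>UNIV. (if i = j then v $ j else 0) - Q i j * v $ j)"
    by (rule sum.cong) (auto simp: Lm_entry left_diff_distrib)
  also have "\<dots> = v $ i - (\<Sum>j\<in>UNIV. Q i j * v $ j)"
    by (simp add: sum_subtractf)
  finally show ?thesis .
qed

lemma LmT_mult: "(transpose (Lm Q) *v v) $ j = v $ j - (\<Sum>i\<in>UNIV. Q i j * v $ i)"
proof -
  have "(transpose (Lm Q) *v v) $ j = (\<Sum>i\<in>UNIV. Lm Q $ i $ j * v $ i)"
    by (simp only: matrix_vector_mult_def vec_lambda_beta transpose_def)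
  also have "\<dots> = (\<Sum>i\<in>UNIV. (if j = i then v $ i else 0) - Q i j * v $ i)"
    by (rule sum.cong) (auto simp: Lm_entry left_diff_distrib)
  also have "\<dots> = v $ j - (\<Sum>i\<in>UNIV. Q i j * v $ i)"
    by (simp add: sum_subtractf)
  finally show ?thesis .
qed

lemma Lm_ker_const:
  fixes Q :: "'s::finite \<Rightarrow> 's \<Rightarrow> real"
  assumes st: "stoch Q" and irr: "irreducible_chain Q" and v: "Lm Q *v v = 0"
  shows "v $ i = v $ j"
proof -
  have "\<And>i. v $ i = (\<Sum>j\<in>UNIV. Q i j * v $ j)"
  proof -
    fix i
    have "(Lm Q *v v) $ i = 0" using v by simp
    then show "v $ i = (\<Sum>j\<in>UNIV. Q i j * v $ j)" using Lm_mult[of Q v i] by linarith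
  qed
  then show ?thesis using harmonic_const[OF st irr, of "\<lambda>i. v $ i"] by blast
qed

lemma rank_Lm:
  fixes Q :: "'s::finite \<Rightarrow> 's \<Rightarrow> real"
  assumes st: "stoch Q" and irr: "irreducible_chain Q"
  shows "rank (Lm Q) = CARD('s) - 1"
proof -
  have one: "Lm Q *v vec 1 = 0"
    using st by (simp add: vec_eq_iff Lm_mult stoch_def)
  have "\<not> inj ((*v) (Lm Q))"
  proof
    assume "inj ((*v) (Lm Q))"
    then have "vec 1 = (0::real^'s)" using one by (metis injD matrix_vector_mult_0_right)
    then show False by (simp add: vec_eq_iff)
  qed
  then have "rank (Lm Q) \<noteq> CARD('s)" using full_rank_injective by blast
  moreover have "rank (Lm Q) \<le> CARD('s)" using rank_bound[of "Lm Q"] by simp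
  moreover have "rank (Lm Q) \<ge> CARD('s) - 1"
  proof -
    fix s0 :: 's
    define H where "H = {v::real^'s. axis s0 1 \<bullet> v = 0}"
    have dH: "dim H = CARD('s) - 1"
      unfolding H_def by (subst dim_hyperplane) (auto simp: axis_eq_0_iff)
    have sH: "span H = H" unfolding H_def by (simp add: subspace_hyperplane)
    have inj: "inj_on ((*v) (Lm Q)) (span H)"
    proof (rule inj_onI)
      fix v w assume vw: "v \<in> span H" "w \<in> span H" "Lm Q *v v = Lm Q *v w"
      then have "Lm Q *v (v - w) = 0" by (simp add: matrix_vector_mult_diff_distrib)
      then have c: "(v - w) $ i = (v - w) $ s0" for i using Lm_ker_const[OF st irr] by blast
      have "v \<in> H" "w \<in> H" using vw(1,2) sH by auto
      then have "(v - w) $ s0 = 0" unfolding H_def by (simp add: inner_axis')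
      then show "v = w" using c by (simp add: vec_eq_iff)
    qed
    have e1: "dim ((*v) (Lm Q) ` H) = dim H"
      by (rule eucl.dim_image_eq[OF matrix_vector_mul_linear inj])
    have e2: "dim ((*v) (Lm Q) ` H) \<le> dim (range ((*v) (Lm Q)))" by (rule dim_subset) auto
    show ?thesis using e1 e2 dH rank_dim_range[of "Lm Q"] by simp
  qed
  ultimately show ?thesis by linarith
qed

lemma stationary_exists:
  fixes Q :: "'s::finite \<Rightarrow> 's \<Rightarrow> real"
  assumes st: "stoch Q" and irr: "irreducible_chain Q"
  shows "\<exists>x. is_stationary Q x"
proof -
  have c0: "0 < CARD('s)" by (rule finite_UNIV_card_ge_0) simp
  have "rank (transpose (Lm Q)) \<noteq> CARD('s)"
    using rank_Lm[OF st irr] rank_transpose[of "Lm Q"] c0 by linarith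
  then have "\<not> inj ((*v) (transpose (Lm Q)))" using full_rank_injective by blast
  then obtain u w where uw: "u \<noteq> w" "transpose (Lm Q) *v u = transpose (Lm Q) *v w"
    unfolding inj_def by blast
  define y where "y = u - w"
  have y0: "y \<noteq> 0" using uw unfolding y_def by simp
  have "transpose (Lm Q) *v y = 0" using uw unfolding y_def by (simp add: matrix_vector_mult_diff_distrib)
  then have "(transpose (Lm Q) *v y) $ j = 0" for j by simp
  then have yeq: "y $ j = (\<Sum>i\<in>UNIV. Q i j * y $ i)" for j
    using LmT_mult[of Q y j] by fastforce
  define z where "z j = \<bar>y $ j\<bar>" for j
  have Qnn: "Q i j \<ge> 0" for i j using st by (simp add: stoch_def)
  have zle: "z j \<le> (\<Sum>i\<in>UNIV. Q i j * z i)" for j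
  proof -
    have "z j = \<bar>\<Sum>i\<in>UNIV. Q i j * y $ i\<bar>" unfolding z_def by (simp only: yeq[of j])
    also have "\<dots> \<le> (\<Sum>i\<in>UNIV. \<bar>Q i j * y $ i\<bar>)" by (rule sum_abs)
    also have "\<dots> = (\<Sum>i\<in>UNIV. Q i j * z i)" unfolding z_def by (simp add: abs_mult Qnn)
    finally show ?thesis .
  qed
  have "(\<Sum>j\<in>UNIV. \<Sum>i\<in>UNIV. Q i j * z i) = (\<Sum>i\<in>UNIV. z i * (\<Sum>j\<in>UNIV. Q i j))"
    by (subst sum.swap) (simp add: sum_distrib_left mult.commute)
  also have "\<dots> = (\<Sum>i\<in>UNIV. z i)" using st by (simp add: stoch_def)
  finally have "(\<Sum>j\<in>UNIV. (\<Sum>i\<in>UNIV. Q i j * z i) - z j) = 0"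
    by (simp add: sum_subtractf)
  then have "\<forall>j\<in>UNIV. (\<Sum>i\<in>UNIV. Q i j * z i) - z j = 0"
    by (subst (asm) sum_nonneg_eq_0_iff) (use zle in auto)
  then have zst0: "(\<Sum>i\<in>UNIV. Q i j * z i) - z j = 0" for j by blast
  have zst: "z j = (\<Sum>i\<in>UNIV. z i * Q i j)" for j
  proof -
    have "(\<Sum>i\<in>UNIV. Q i j * z i) = (\<Sum>i\<in>UNIV. z i * Q i j)" by (simp add: mult.commute)
    then show ?thesis using zst0[of j] by linarith
  qed
  define S where "S = (\<Sum>j\<in>UNIV. z j)"
  have znn: "z j \<ge> 0" for j by (simp add: z_def)
  obtain j0 where "y $ j0 \<noteq> 0" using y0 by (metis vec_eq_iff zero_index)
  then have "z j0 > 0" by (simp add: z_def)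
  moreover have "z j0 \<le> S" unfolding S_def by (rule member_le_sum) (auto simp: znn)
  ultimately have Spos: "S > 0" by linarith
  define x where "x j = z j / S" for j
  have "is_stationary Q x"
    unfolding is_stationary_def
  proof (intro conjI allI)
    show "x s \<ge> 0" for s using znn Spos by (simp add: x_def)
    show "(\<Sum>s\<in>UNIV. x s) = 1" using Spos by (simp add: x_def S_def[symmetric] flip: sum_divide_distrib)
    show "x s' = (\<Sum>s\<in>UNIV. x s * Q s s')" for s'
    proof -
      have e: "(\<Sum>s\<in>UNIV. z s / S * Q s s') = (\<Sum>s\<in>UNIV. z s * Q s s') / S"
        by (simp add: sum_divide_distrib)
      show ?thesis unfolding x_def by (simp only: e zst[of s', symmetric])
    qed
  qed
  then show ?thesis by blast
qed

lemma stationary_sum_Q: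
  fixes Q :: "'s::finite \<Rightarrow> 's \<Rightarrow> real"
  assumes "is_stationary Q x"
  shows "(\<Sum>i\<in>UNIV. x i * (\<Sum>k\<in>UNIV. Q i k * h k)) = (\<Sum>k\<in>UNIV. x k * h k)"
proof -
  have "(\<Sum>i\<in>UNIV. x i * (\<Sum>k\<in>UNIV. Q i k * h k)) = (\<Sum>k\<in>UNIV. (\<Sum>i\<in>UNIV. x i * Q i k) * h k)"
    by (simp add: sum_distrib_left sum_distrib_right mult.assoc) (rule sum.swap)
  also have "\<dots> = (\<Sum>k\<in>UNIV. x k * h k)"
    by (simp only: stat_eq[OF assms, symmetric])
  finally show ?thesis .
qed

lemma poisson:
  fixes Q :: "'s::finite \<Rightarrow> 's \<Rightarrow> real"
  assumes st: "stoch Q" and irr: "irreducible_chain Q" and x: "is_stationary Q x"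
  shows "\<exists>h. \<forall>i. h i = r i - (\<Sum>j\<in>UNIV. x j * r j) + (\<Sum>j\<in>UNIV. Q i j * h j)"
proof -
  define g where "g = (\<Sum>j\<in>UNIV. x j * r j)"
  define xv where "xv = ((\<chi> i. x i) :: real^'s)"
  have sum1: "(\<Sum>s\<in>UNIV. x s) = 1" using stat_sum[OF x] .
  have xv0: "xv \<noteq> 0"
  proof
    assume "xv = 0" then have "\<forall>s. x s = 0" by (simp add: xv_def vec_eq_iff)
    then show False using sum1 by simp
  qed
  define Hx where "Hx = {v::real^'s. xv \<bullet> v = 0}"
  have sub: "range ((*v) (Lm Q)) \<subseteq> Hx"
  proof clarify
    fix v :: "real^'s"
    have "xv \<bullet> (Lm Q *v v) = (\<Sum>i\<in>UNIV. x i * (v $ i - (\<Sum>j\<in>UNIV. Q i j * v $ j)))"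
      by (simp add: inner_vec_def xv_def Lm_mult)
    also have "\<dots> = (\<Sum>i\<in>UNIV. x i * v $ i) - (\<Sum>i\<in>UNIV. x i * (\<Sum>j\<in>UNIV. Q i j * v $ j))"
      by (simp add: right_diff_distrib sum_subtractf)
    also have "\<dots> = 0" using stationary_sum_Q[OF x, of "\<lambda>j. v $ j"] by simp
    finally show "Lm Q *v v \<in> Hx" unfolding Hx_def by simp
  qed
  have dHx: "dim Hx = CARD('s) - 1" unfolding Hx_def by (subst dim_hyperplane[OF xv0]) simp
  have "range ((*v) (Lm Q)) = Hx"
  proof (rule subspace_dim_equal)
    show "subspace (range ((*v) (Lm Q)))"
      by (rule linear_subspace_image[OF matrix_vector_mul_linear subspace_UNIV])
    show "subspace Hx" unfolding Hx_def by (rule subspace_hyperplane)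
    show "range ((*v) (Lm Q)) \<subseteq> Hx" by (rule sub)
    show "dim Hx \<le> dim (range ((*v) (Lm Q)))"
      using dHx rank_Lm[OF st irr] rank_dim_range[of "Lm Q"] by simp
  qed
  moreover have "(\<chi> i. r i - g) \<in> Hx"
  proof -
    have "xv \<bullet> (\<chi> i. r i - g) = (\<Sum>i\<in>UNIV. x i * (r i - g))"
      by (simp add: inner_vec_def xv_def)
    also have "\<dots> = (\<Sum>i\<in>UNIV. x i * r i) - g * (\<Sum>i\<in>UNIV. x i)"
      by (simp add: right_diff_distrib sum_subtractf sum_distrib_left mult.commute)
    also have "\<dots> = 0" by (simp add: sum1 g_def)
    finally show ?thesis unfolding Hx_def by simp
  qed
  ultimately obtain v where v: "Lm Q *v v = (\<chi> i. r i - g)" by (metis rangeE)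
  have "v $ i = r i - g + (\<Sum>j\<in>UNIV. Q i j * v $ j)" for i
    using arg_cong[OF v, of "\<lambda>u. u $ i"] by (simp add: Lm_mult)
  then show ?thesis unfolding g_def by blast
qed

lemma stationary_unique:
  fixes Q :: "'s::finite \<Rightarrow> 's \<Rightarrow> real"
  assumes st: "stoch Q" and irr: "irreducible_chain Q"
    and x: "is_stationary Q x" and y: "is_stationary Q y"
  shows "x = y"
proof
  fix j
  define r where "r i = (if i = j then 1 else (0::real))" for i :: 's
  obtain h where h: "\<And>i. h i = r i - (\<Sum>k\<in>UNIV. x k * r k) + (\<Sum>k\<in>UNIV. Q i k * h k)"
    using poisson[OF st irr x, of r] by blast
  have "(\<Sum>k\<in>UNIV. x k * r k) = (\<Sum>k\<in>UNIV. if k = j then x k else 0)" by (rule sum.cong) (auto simp: r_def)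
  then have gx: "(\<Sum>k\<in>UNIV. x k * r k) = x j" by simp
  have "(\<Sum>i\<in>UNIV. y i * (h i - (\<Sum>k\<in>UNIV. Q i k * h k))) = 0"
    using stationary_sum_Q[OF y, of h] by (simp add: right_diff_distrib sum_subtractf)
  moreover have "(\<Sum>i\<in>UNIV. y i * (h i - (\<Sum>k\<in>UNIV. Q i k * h k))) = (\<Sum>i\<in>UNIV. y i * (r i - x j))"
  proof (rule sum.cong[OF refl])
    fix i
    have "h i - (\<Sum>k\<in>UNIV. Q i k * h k) = r i - x j" using h[of i] gx by linarith
    then show "y i * (h i - (\<Sum>k\<in>UNIV. Q i k * h k)) = y i * (r i - x j)" by simp
  qed
  moreover have "(\<Sum>i\<in>UNIV. y i * (r i - x j)) = (\<Sum>i\<in>UNIV. y i * r i) - x j * (\<Sum>i\<in>UNIV. y i)"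
    by (simp add: right_diff_distrib sum_subtractf sum_distrib_left mult.commute)
  moreover have "(\<Sum>i\<in>UNIV. y i * r i) = (\<Sum>k\<in>UNIV. if k = j then y k else 0)" by (rule sum.cong) (auto simp: r_def)
  moreover have "(\<Sum>k\<in>UNIV. if k = j then y k else 0) = y j" by simp
  moreover have "(\<Sum>i\<in>UNIV. y i) = 1" by (rule stat_sum[OF y])
  ultimately show "x j = y j" by simp
qed

lemma stat_dist_stationary:
  fixes Q :: "'s::finite \<Rightarrow> 's \<Rightarrow> real"
  assumes st: "stoch Q" and irr: "irreducible_chain Q"
  shows "is_stationary Q (stat_dist Q)"
proof -
  obtain x where x: "is_stationary Q x" using stationary_exists[OF st irr] by blast
  have "stat_dist Q = x" unfolding stat_dist_def
    by (rule the_equality, rule x, metis stationary_unique[OF st irr x])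
  then show ?thesis using x by simp
qed


lemma feas_nn: "lp_feasible Acts P \<pi> \<Longrightarrow> a \<in> Acts s \<Longrightarrow> \<pi> s a \<ge> 0"
  unfolding lp_feasible_def by blast
lemma feas_sum: "lp_feasible Acts P \<pi> \<Longrightarrow> (\<Sum>s\<in>UNIV. \<Sum>a\<in>Acts s. \<pi> s a) = 1"
  unfolding lp_feasible_def by blast
lemma feas_flow: "lp_feasible Acts P \<pi> \<Longrightarrow>
   (\<Sum>a\<in>Acts s'. \<pi> s' a) = (\<Sum>s\<in>UNIV. \<Sum>a\<in>Acts s. \<pi> s a * P s a s')"
  unfolding lp_feasible_def by blast

lemma feas_identity:
  fixes \<pi> :: "'s::finite \<Rightarrow> 'a::finite \<Rightarrow> real"
  assumes F: "lp_feasible Acts P \<pi>"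
  shows "(\<Sum>s\<in>UNIV. \<Sum>a\<in>Acts s. \<pi> s a * (g + h s - r s a - (\<Sum>s'\<in>UNIV. P s a s' * h s')))
         = g - lp_obj Acts r \<pi>"
proof -
  have A: "(\<Sum>s\<in>UNIV. \<Sum>a\<in>Acts s. \<pi> s a * g) = (\<Sum>s\<in>UNIV. \<Sum>a\<in>Acts s. \<pi> s a) * g"
    by (simp add: sum_distrib_right)
  have B: "(\<Sum>s\<in>UNIV. \<Sum>a\<in>Acts s. \<pi> s a * h s) = (\<Sum>s\<in>UNIV. (\<Sum>a\<in>Acts s. \<pi> s a) * h s)"
    by (simp add: sum_distrib_right)
  have "(\<Sum>s\<in>UNIV. \<Sum>a\<in>Acts s. \<pi> s a * (\<Sum>s'\<in>UNIV. P s a s' * h s'))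
      = (\<Sum>s\<in>UNIV. \<Sum>a\<in>Acts s. \<Sum>s'\<in>UNIV. \<pi> s a * P s a s' * h s')"
    by (simp add: sum_distrib_left mult.assoc)
  also have "\<dots> = (\<Sum>s\<in>UNIV. \<Sum>s'\<in>UNIV. \<Sum>a\<in>Acts s. \<pi> s a * P s a s' * h s')"
    by (rule sum.cong[OF refl], rule sum.swap)
  also have "\<dots> = (\<Sum>s'\<in>UNIV. \<Sum>s\<in>UNIV. \<Sum>a\<in>Acts s. \<pi> s a * P s a s' * h s')"
    by (rule sum.swap)
  also have "\<dots> = (\<Sum>s'\<in>UNIV. (\<Sum>s\<in>UNIV. \<Sum>a\<in>Acts s. \<pi> s a * P s a s') * h s')"
    by (simp add: sum_distrib_right)
  also have "\<dots> = (\<Sum>s'\<in>UNIV. (\<Sum>a\<in>Acts s'. \<pi> s' a) * h s')"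
    by (simp only: feas_flow[OF F, symmetric])
  finally have C: "(\<Sum>s\<in>UNIV. \<Sum>a\<in>Acts s. \<pi> s a * (\<Sum>s'\<in>UNIV. P s a s' * h s'))
      = (\<Sum>s'\<in>UNIV. (\<Sum>a\<in>Acts s'. \<pi> s' a) * h s')" .
  have "(\<Sum>s\<in>UNIV. \<Sum>a\<in>Acts s. \<pi> s a * (g + h s - r s a - (\<Sum>s'\<in>UNIV. P s a s' * h s')))
     = (\<Sum>s\<in>UNIV. \<Sum>a\<in>Acts s. \<pi> s a * g) + (\<Sum>s\<in>UNIV. \<Sum>a\<in>Acts s. \<pi> s a * h s)
       - (\<Sum>s\<in>UNIV. \<Sum>a\<in>Acts s. \<pi> s a * r s a)
       - (\<Sum>s\<in>UNIV. \<Sum>a\<in>Acts s. \<pi> s a * (\<Sum>s'\<in>UNIV. P s a s' * h s'))"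
    by (simp add: algebra_simps sum.distrib sum_subtractf)
  also have "\<dots> = g - lp_obj Acts r \<pi>"
    unfolding A B C lp_obj_def feas_sum[OF F] by simp
  finally show ?thesis .
qed

locale mdp =
  fixes Acts :: "'s::finite \<Rightarrow> 'a::finite set"
    and P :: "'s \<Rightarrow> 'a \<Rightarrow> 's \<Rightarrow> real"
    and bstar :: "'s \<Rightarrow> 'a"
  assumes P_nonneg: "\<And>s a s'. a \<in> Acts s \<Longrightarrow> P s a s' \<ge> 0"
    and P_sum: "\<And>s a. a \<in> Acts s \<Longrightarrow> (\<Sum>s'\<in>UNIV. P s a s') = 1"
    and irr: "\<And>\<beta>. admissible Acts \<beta> \<Longrightarrow> irreducible_chain (pol_mat P \<beta>)"
    and bstar_adm: "admissible Acts bstar"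
begin

definition xs :: "('s \<Rightarrow> 'a) \<Rightarrow> 's \<Rightarrow> real" where
  "xs \<beta> = stat_dist (pol_mat P \<beta>)"

definition occ :: "('s \<Rightarrow> 'a) \<Rightarrow> 's \<Rightarrow> 'a \<Rightarrow> real" where
  "occ \<beta> s a = xs \<beta> s * (if a = \<beta> s then 1 else 0)"

lemma stoch_pol: "admissible Acts \<beta> \<Longrightarrow> stoch (pol_mat P \<beta>)"
  unfolding stoch_def pol_mat_def admissible_def using P_nonneg P_sum by blast

lemma xs_stat: "admissible Acts \<beta> \<Longrightarrow> is_stationary (pol_mat P \<beta>) (xs \<beta>)"
  unfolding xs_def by (rule stat_dist_stationary[OF stoch_pol irr])

lemma occ_state:
  assumes b: "\<beta> s \<in> Acts s"
  shows "(\<Sum>a\<in>Acts s. occ \<beta> s a * F a) = xs \<beta> s * F (\<beta> s)"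
proof -
  have "(\<Sum>a\<in>Acts s. occ \<beta> s a * F a) = (\<Sum>a\<in>Acts s. if a = \<beta> s then xs \<beta> s * F a else 0)"
    by (rule sum.cong) (auto simp: occ_def)
  also have "\<dots> = xs \<beta> s * F (\<beta> s)" using b by (simp add: sum.delta')
  finally show ?thesis .
qed

lemma occ_sum:
  assumes "admissible Acts \<beta>"
  shows "(\<Sum>s\<in>UNIV. \<Sum>a\<in>Acts s. occ \<beta> s a * F s a) = (\<Sum>s\<in>UNIV. xs \<beta> s * F s (\<beta> s))"
  by (rule sum.cong[OF refl], rule occ_state) (use assms in \<open>auto simp: admissible_def\<close>)

lemma occ_feasible:
  assumes adm: "admissible Acts \<beta>"
  shows "lp_feasible Acts P (occ \<beta>)"
proof -
  have st: "is_stationary (pol_mat P \<beta>) (xs \<beta>)" by (rule xs_stat[OF adm])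
  have b: "\<beta> s \<in> Acts s" for s using adm unfolding admissible_def by blast
  have one: "(\<Sum>a\<in>Acts s. occ \<beta> s a) = xs \<beta> s" for s
    using occ_state[where F="\<lambda>_. 1" and \<beta>=\<beta> and s=s, OF b[of s]] by simp
  show ?thesis unfolding lp_feasible_def
  proof (intro conjI allI ballI)
    show "occ \<beta> s a \<ge> 0" for s a
      using stat_nn[OF st] by (simp add: occ_def)
    show "(\<Sum>s\<in>UNIV. \<Sum>a\<in>Acts s. occ \<beta> s a) = 1"
      by (simp only: one stat_sum[OF st])
    fix s'
    have "(\<Sum>s\<in>UNIV. \<Sum>a\<in>Acts s. occ \<beta> s a * P s a s') = (\<Sum>s\<in>UNIV. xs \<beta> s * pol_mat P \<beta> s s')"
      by (rule sum.cong[OF refl], subst occ_state[where \<beta>=\<beta>, OF b]) (simp_all add: pol_mat_def)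
    also have "\<dots> = xs \<beta> s'" by (rule stat_eq[OF st, symmetric])
    finally show "(\<Sum>a\<in>Acts s'. occ \<beta> s' a) = (\<Sum>s\<in>UNIV. \<Sum>a\<in>Acts s. occ \<beta> s a * P s a s')"
      by (simp only: one)
  qed
qed

lemma obj_occ:
  assumes "admissible Acts \<beta>"
  shows "lp_obj Acts \<Theta> (occ \<beta>) = rho P \<beta> \<Theta>"
  unfolding lp_obj_def rho_def occ_sum[OF assms] xs_def ..

definition gst :: "('s \<Rightarrow> 'a \<Rightarrow> real) \<Rightarrow> real" where
  "gst r = (\<Sum>s\<in>UNIV. xs bstar s * r s (bstar s))"

definition hst :: "('s \<Rightarrow> 'a \<Rightarrow> real) \<Rightarrow> 's \<Rightarrow> real" where
  "hst r = (SOME h. \<forall>i. h i = r i (bstar i) - gst r + (\<Sum>j\<in>UNIV. pol_mat P bstar i j * h j))"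

definition Dc :: "('s \<Rightarrow> 'a \<Rightarrow> real) \<Rightarrow> 's \<Rightarrow> 'a \<Rightarrow> real" where
  "Dc r s a = gst r + hst r s - r s a - (\<Sum>s'\<in>UNIV. P s a s' * hst r s')"

lemma hst: "\<forall>i. hst r i = r i (bstar i) - gst r + (\<Sum>j\<in>UNIV. pol_mat P bstar i j * hst r j)"
proof -
  have "\<exists>h. \<forall>i. h i = r i (bstar i) - gst r + (\<Sum>j\<in>UNIV. pol_mat P bstar i j * h j)"
    using poisson[OF stoch_pol[OF bstar_adm] irr[OF bstar_adm] xs_stat[OF bstar_adm], of "\<lambda>i. r i (bstar i)"]
    unfolding gst_def .
  then show ?thesis unfolding hst_def by (rule someI_ex)
qed

lemma Dc_bstar: "Dc r s (bstar s) = 0"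
proof -
  have e: "hst r s = r s (bstar s) - gst r + (\<Sum>j\<in>UNIV. P s (bstar s) j * hst r j)"
    using hst[of r, unfolded pol_mat_def] by blast
  show ?thesis unfolding Dc_def using e by linarith
qed

lemma Dc_identity:
  assumes "lp_feasible Acts P \<pi>"
  shows "(\<Sum>s\<in>UNIV. \<Sum>a\<in>Acts s. \<pi> s a * Dc r s a) = gst r - lp_obj Acts r \<pi>"
  unfolding Dc_def by (rule feas_identity[OF assms])

lemma gst_rho: "gst r = rho P bstar r"
  unfolding gst_def rho_def xs_def ..

lemma Dc_pos:
  assumes gap: "\<And>\<beta>. admissible Acts \<beta> \<Longrightarrow> \<beta> \<noteq> bstar \<Longrightarrow> rho P \<beta> \<mu> < rho P bstar \<mu>"
    and a: "a \<in> Acts s" "a \<noteq> bstar s"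
  shows "Dc \<mu> s a > 0"
proof (rule ccontr)
  assume le: "\<not> Dc \<mu> s a > 0"
  define \<beta> where "\<beta> = bstar(s := a)"
  have adm: "admissible Acts \<beta>" using bstar_adm a unfolding admissible_def \<beta>_def by auto
  have ne: "\<beta> \<noteq> bstar" using a unfolding \<beta>_def by (metis fun_upd_same)
  have "(\<Sum>t\<in>UNIV. \<Sum>b\<in>Acts t. occ \<beta> t b * Dc \<mu> t b) = gst \<mu> - lp_obj Acts \<mu> (occ \<beta>)"
    by (rule Dc_identity[OF occ_feasible[OF adm]])
  also have "\<dots> = rho P bstar \<mu> - rho P \<beta> \<mu>" by (simp add: gst_rho obj_occ[OF adm])
  finally have eq1: "(\<Sum>t\<in>UNIV. xs \<beta> t * Dc \<mu> t (\<beta> t)) = rho P bstar \<mu> - rho P \<beta> \<mu>"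
    by (simp add: occ_sum[OF adm])
  have "(\<Sum>t\<in>UNIV. xs \<beta> t * Dc \<mu> t (\<beta> t)) = (\<Sum>t\<in>UNIV. if t = s then xs \<beta> s * Dc \<mu> s a else 0)"
    by (rule sum.cong) (auto simp: \<beta>_def Dc_bstar)
  also have "\<dots> = xs \<beta> s * Dc \<mu> s a" by simp
  also have "\<dots> \<le> 0" using le stat_nn[OF xs_stat[OF adm]] by (simp add: mult_nonneg_nonpos)
  finally show False using eq1 gap[OF adm ne] by linarith
qed

end


lemma pos_min:
  assumes "finite S" "\<And>x. x \<in> S \<Longrightarrow> (f x::real) > 0"
  shows "\<exists>\<delta>>0. \<forall>x\<in>S. \<delta> \<le> f x"
proof (cases "S = {}")
  case True then show ?thesis by (intro exI[of _ 1]) auto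
next
  case False
  have "Min (f ` S) \<in> f ` S" using assms(1) False by (intro Min_in) auto
  then have "Min (f ` S) > 0" using assms(2) by auto
  moreover have "\<forall>x\<in>S. Min (f ` S) \<le> f x" using assms(1) by auto
  ultimately show ?thesis by blast
qed

lemma fin_bound:
  fixes f :: "'b::finite \<Rightarrow> real"
  shows "\<exists>K\<ge>0. \<forall>x. \<bar>f x\<bar> \<le> K"
proof -
  define K where "K = Max (range (\<lambda>x. \<bar>f x\<bar>))"
  have "\<forall>x. \<bar>f x\<bar> \<le> K" unfolding K_def by simp
  moreover then have "K \<ge> 0" by (meson abs_ge_zero order_trans)
  ultimately show ?thesis by blast
qed

context mdp begin

definition ind :: "'s \<Rightarrow> 's \<Rightarrow> 'a \<Rightarrow> real" where
  "ind s0 s a = (if s = s0 then 1 else 0)"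

lemma gst_ind: "gst (ind s0) = xs bstar s0"
proof -
  have "gst (ind s0) = (\<Sum>s\<in>UNIV. if s = s0 then xs bstar s else 0)"
    unfolding gst_def by (rule sum.cong) (auto simp: ind_def)
  then show ?thesis by simp
qed

lemma obj_ind: "lp_obj Acts (ind s0) \<pi> = (\<Sum>a\<in>Acts s0. \<pi> s0 a)"
proof -
  have "lp_obj Acts (ind s0) \<pi> = (\<Sum>s\<in>UNIV. if s = s0 then (\<Sum>a\<in>Acts s. \<pi> s a) else 0)"
    unfolding lp_obj_def by (rule sum.cong) (auto simp: ind_def)
  then show ?thesis by simp
qed

lemma obj_close:
  assumes F: "lp_feasible Acts P \<pi>" and cl: "\<forall>s. \<forall>a\<in>Acts s. \<bar>\<Theta> s a - \<mu> s a\<bar> \<le> \<epsilon>"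
  shows "\<bar>lp_obj Acts \<Theta> \<pi> - lp_obj Acts \<mu> \<pi>\<bar> \<le> \<epsilon>"
proof -
  have "lp_obj Acts \<Theta> \<pi> - lp_obj Acts \<mu> \<pi> = (\<Sum>s\<in>UNIV. \<Sum>a\<in>Acts s. \<pi> s a * (\<Theta> s a - \<mu> s a))"
    unfolding lp_obj_def by (simp add: right_diff_distrib sum_subtractf)
  also have "\<bar>\<dots>\<bar> \<le> (\<Sum>s\<in>UNIV. \<Sum>a\<in>Acts s. \<bar>\<pi> s a * (\<Theta> s a - \<mu> s a)\<bar>)"
    by (rule order_trans[OF sum_abs sum_mono]) (rule sum_abs)
  also have "\<dots> \<le> (\<Sum>s\<in>UNIV. \<Sum>a\<in>Acts s. \<pi> s a * \<epsilon>)"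
  proof (intro sum_mono)
    fix s a assume "a \<in> Acts s"
    then show "\<bar>\<pi> s a * (\<Theta> s a - \<mu> s a)\<bar> \<le> \<pi> s a * \<epsilon>"
      using feas_nn[OF F] cl by (simp add: abs_mult mult_left_mono)
  qed
  also have "\<dots> = \<epsilon>" using feas_sum[OF F] by (simp add: sum_distrib_right[symmetric])
  finally show ?thesis .
qed

lemma lp_stable:
  assumes gap: "\<And>\<beta>. admissible Acts \<beta> \<Longrightarrow> \<beta> \<noteq> bstar \<Longrightarrow> rho P \<beta> \<mu> < rho P bstar \<mu>"
  shows "\<exists>\<epsilon>>0. \<forall>\<Theta> \<beta>. (\<forall>s. \<forall>a\<in>Acts s. \<bar>\<Theta> s a - \<mu> s a\<bar> \<le> \<epsilon>) \<longrightarrow>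
            lpsm_choice Acts P \<Theta> \<beta> \<longrightarrow> \<beta> = bstar"
proof -
  obtain \<delta> where \<delta>: "\<delta> > 0" and \<delta>le: "\<And>s a. a \<in> Acts s \<Longrightarrow> a \<noteq> bstar s \<Longrightarrow> \<delta> \<le> Dc \<mu> s a"
    using pos_min[of "{(s,a). a \<in> Acts s \<and> a \<noteq> bstar s}" "\<lambda>(s,a). Dc \<mu> s a"] Dc_pos[OF gap]
    by (auto simp: finite_prod)
  obtain K where K0: "K \<ge> 0" and K: "\<And>s0 s a. \<bar>Dc (ind s0) s a\<bar> \<le> K"
    using fin_bound[of "\<lambda>(s0,s,a). Dc (ind s0) s a"] by auto
  obtain p where p: "p > 0" and ple: "\<And>s. p \<le> xs bstar s"
    using pos_min[of UNIV "xs bstar"]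
      stationary_pos[OF stoch_pol[OF bstar_adm] irr[OF bstar_adm] xs_stat[OF bstar_adm]] by auto
  define \<epsilon> where "\<epsilon> = p * \<delta> / (4 * (K + 2))"
  have \<epsilon>0: "\<epsilon> > 0" unfolding \<epsilon>_def using p \<delta> K0 by simp
  have "\<beta> = bstar" if cl: "\<forall>s. \<forall>a\<in>Acts s. \<bar>\<Theta> s a - \<mu> s a\<bar> \<le> \<epsilon>"
    and ch: "lpsm_choice Acts P \<Theta> \<beta>" for \<Theta> \<beta>
  proof -
    obtain \<pi> where opt: "lp_optimal Acts P \<Theta> \<pi>"
      and bA: "\<And>s. \<beta> s \<in> Acts s" and bmax: "\<And>s a. a \<in> Acts s \<Longrightarrow> \<pi> s a \<le> \<pi> s (\<beta> s)"
      using ch unfolding lpsm_choice_def by blast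
    have F: "lp_feasible Acts P \<pi>" using opt unfolding lp_optimal_def by blast
    have Fs: "lp_feasible Acts P (occ bstar)" by (rule occ_feasible[OF bstar_adm])
    have "lp_obj Acts \<Theta> (occ bstar) \<le> lp_obj Acts \<Theta> \<pi>"
      using opt Fs unfolding lp_optimal_def by blast
    moreover have "lp_obj Acts \<mu> (occ bstar) = gst \<mu>" by (simp add: obj_occ[OF bstar_adm] gst_rho)
    moreover note obj_close[OF F cl] obj_close[OF Fs cl]
    ultimately have objlb: "lp_obj Acts \<mu> \<pi> \<ge> gst \<mu> - 2 * \<epsilon>" by linarith
    have pn: "\<And>s a. a \<in> Acts s \<Longrightarrow> \<pi> s a \<ge> 0" using feas_nn[OF F] by blast
    define nb where "nb s a = (if a = bstar s then 0 else (1::real))" for s a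
    define mm where "mm = (\<Sum>s\<in>UNIV. \<Sum>a\<in>Acts s. \<pi> s a * nb s a)"
    have "\<delta> * mm \<le> (\<Sum>s\<in>UNIV. \<Sum>a\<in>Acts s. \<pi> s a * Dc \<mu> s a)"
      unfolding mm_def sum_distrib_left
    proof (intro sum_mono)
      fix s a assume a: "a \<in> Acts s"
      show "\<delta> * (\<pi> s a * nb s a) \<le> \<pi> s a * Dc \<mu> s a"
      proof (cases "a = bstar s")
        case True then show ?thesis by (simp add: nb_def Dc_bstar)
      next
        case False
        then have "\<delta> * \<pi> s a \<le> Dc \<mu> s a * \<pi> s a"
          using \<delta>le[OF a False] pn[OF a] by (simp add: mult_right_mono)
        then show ?thesis using False by (simp add: nb_def mult.commute)
      qed
    qed
    also have "\<dots> = gst \<mu> - lp_obj Acts \<mu> \<pi>" by (rule Dc_identity[OF F])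
    finally have dmm: "\<delta> * mm \<le> 2 * \<epsilon>" using objlb by linarith
    have mm_bound: "(K + 2) * mm \<le> p / 2"
    proof -
      have "2 * \<epsilon> = \<delta> * (p / (2 * (K + 2)))" unfolding \<epsilon>_def using K0 by (simp add: field_simps)
      then have "mm \<le> p / (2 * (K + 2))" using dmm \<delta> by (metis mult_le_cancel_left_pos)
      then have "(K + 2) * mm \<le> (K + 2) * (p / (2 * (K + 2)))"
        by (rule mult_left_mono) (use K0 in simp)
      also have "\<dots> = p / 2" using K0 by (simp add: field_simps)
      finally show ?thesis .
    qed
    show "\<beta> = bstar"
    proof (rule ccontr)
      assume "\<beta> \<noteq> bstar"
      then obtain s0 where ne: "\<beta> s0 \<noteq> bstar s0" by blast
      have b0: "bstar s0 \<in> Acts s0" using bstar_adm unfolding admissible_def by blast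
      have "(\<Sum>a\<in>Acts s0. \<pi> s0 a) = gst (ind s0) - (\<Sum>s\<in>UNIV. \<Sum>a\<in>Acts s. \<pi> s a * Dc (ind s0) s a)"
        using Dc_identity[OF F, of "ind s0"] obj_ind[of s0 \<pi>] by linarith
      moreover have "\<bar>\<Sum>s\<in>UNIV. \<Sum>a\<in>Acts s. \<pi> s a * Dc (ind s0) s a\<bar> \<le> K * mm"
      proof -
        have "\<bar>\<Sum>s\<in>UNIV. \<Sum>a\<in>Acts s. \<pi> s a * Dc (ind s0) s a\<bar>
              \<le> (\<Sum>s\<in>UNIV. \<Sum>a\<in>Acts s. \<bar>\<pi> s a * Dc (ind s0) s a\<bar>)"
          by (rule order_trans[OF sum_abs sum_mono]) (rule sum_abs)
        also have "\<dots> \<le> (\<Sum>s\<in>UNIV. \<Sum>a\<in>Acts s. K * (\<pi> s a * nb s a))"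
        proof (intro sum_mono)
          fix s a assume a: "a \<in> Acts s"
          show "\<bar>\<pi> s a * Dc (ind s0) s a\<bar> \<le> K * (\<pi> s a * nb s a)"
          proof (cases "a = bstar s")
            case True then show ?thesis by (simp add: nb_def Dc_bstar)
          next
            case False
            have "\<bar>\<pi> s a * Dc (ind s0) s a\<bar> = \<pi> s a * \<bar>Dc (ind s0) s a\<bar>"
              using pn[OF a] by (simp add: abs_mult)
            also have "\<dots> \<le> \<pi> s a * K" using K pn[OF a] by (simp add: mult_left_mono)
            finally show ?thesis using False by (simp add: nb_def mult.commute)
          qed
        qed
        also have "\<dots> = K * mm" unfolding mm_def by (simp add: sum_distrib_left)
        finally show ?thesis .
      qed
      ultimately have x0: "(\<Sum>a\<in>Acts s0. \<pi> s0 a) \<ge> p - K * mm"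
        using gst_ind[of s0] ple[of s0] by linarith
      have loc: "(\<Sum>a\<in>Acts s0. \<pi> s0 a * nb s0 a) \<le> mm"
        unfolding mm_def
        by (rule member_le_sum) (auto intro!: sum_nonneg mult_nonneg_nonneg pn simp: nb_def)
      have split: "(\<Sum>a\<in>Acts s0. \<pi> s0 a) = \<pi> s0 (bstar s0) + (\<Sum>a\<in>Acts s0. \<pi> s0 a * nb s0 a)"
      proof -
        have "(\<Sum>a\<in>Acts s0. \<pi> s0 a) = (\<Sum>a\<in>Acts s0. (if a = bstar s0 then \<pi> s0 a else 0) + \<pi> s0 a * nb s0 a)"
          by (rule sum.cong) (auto simp: nb_def)
        also have "\<dots> = \<pi> s0 (bstar s0) + (\<Sum>a\<in>Acts s0. \<pi> s0 a * nb s0 a)"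
          using b0 by (simp add: sum.distrib sum.delta')
        finally show ?thesis .
      qed
      have "\<pi> s0 (\<beta> s0) = \<pi> s0 (\<beta> s0) * nb s0 (\<beta> s0)" using ne by (simp add: nb_def)
      also have "\<dots> \<le> (\<Sum>a\<in>Acts s0. \<pi> s0 a * nb s0 a)"
        by (rule member_le_sum) (auto intro!: mult_nonneg_nonneg pn bA simp: nb_def)
      finally have "\<pi> s0 (\<beta> s0) \<le> mm" using loc by linarith
      moreover have "\<pi> s0 (bstar s0) \<le> \<pi> s0 (\<beta> s0)" by (rule bmax[OF b0])
      ultimately have "p - K * mm - mm \<le> mm" using x0 split loc by linarith
      moreover have "(K + 2) * mm = K * mm + 2 * mm" by (simp add: algebra_simps)
      ultimately show False using mm_bound p by linarith
    qed
  qed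
  then show ?thesis using \<epsilon>0 by blast
qed

end


lemma summable_lin_exp:
  fixes c :: real assumes c: "c > 0"
  shows "summable (\<lambda>n. real n * exp (- c * real n))"
proof (rule summable_comparison_test'[where N=0])
  show "summable (\<lambda>n. (2 / c) * exp (- c / 2) ^ n)"
    by (rule summable_mult, rule summable_geometric) (use c in simp)
  fix n :: nat
  have "c * real n / 2 \<le> exp (c * real n / 2)"
    using exp_ge_add_one_self[of "c * real n / 2"] by linarith
  then have "real n \<le> (2 / c) * exp (c * real n / 2)" using c by (simp add: field_simps)
  then have "real n * exp (- c * real n) \<le> (2 / c) * exp (c * real n / 2) * exp (- c * real n)"
    by (rule mult_right_mono) simp
  also have "\<dots> = (2 / c) * exp (real n * (- c / 2))"
    by (simp add: mult.assoc exp_add[symmetric] field_simps)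
  also have "\<dots> = (2 / c) * exp (- c / 2) ^ n" by (simp only: exp_of_nat_mult)
  finally show "norm (real n * exp (- c * real n)) \<le> (2 / c) * exp (- c / 2) ^ n" by simp
qed

lemma ennreal_term_le_suminf: "(f i :: ennreal) \<le> suminf f"
  using sum_le_suminf[OF summableI, of "{i}" f] by simp

lemma ennreal_unbounded_top:
  assumes "\<And>k. of_nat k \<le> (x::ennreal)" shows "x = \<top>"
proof -
  have "(SUP k. of_nat k) \<le> x" by (rule SUP_least) (use assms in auto)
  then show ?thesis using ennreal_SUP_of_nat_eq_top by (simp add: top_unique)
qed

lemma fs_bound:
  fixes g :: "nat \<Rightarrow> ennreal"
  assumes bad: "\<And>n. n \<ge> 1 \<Longrightarrow> bs n \<noteq> bstar \<Longrightarrow> g n \<ge> 1"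
  shows "first_stable bs bstar \<le> 1 + (\<Sum>m. of_nat (Suc m) * g (Suc m))"
proof (cases "finite {n. n \<ge> 1 \<and> bs n \<noteq> bstar}")
  case True
  define BAD where "BAD = {n. n \<ge> 1 \<and> bs n \<noteq> bstar}"
  define N where "N = (if BAD = {} then 0 else Max BAD)"
  have fin: "finite BAD" using True unfolding BAD_def .
  have good: "\<forall>t\<ge>Suc N. bs t = bstar"
  proof (intro allI impI)
    fix t assume t: "Suc N \<le> t"
    show "bs t = bstar"
    proof (rule ccontr)
      assume "bs t \<noteq> bstar"
      then have "t \<in> BAD" using t unfolding BAD_def by simp
      then have "t \<le> N" unfolding N_def using fin by (auto intro: Max_ge)
      then show False using t by simp
    qed
  qed
  have "first_stable bs bstar \<le> ennreal (real (Suc N))"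
    unfolding first_stable_def by (rule INF_lower) (use good in auto)
  also have "\<dots> \<le> 1 + (\<Sum>m. of_nat (Suc m) * g (Suc m))"
  proof (cases "BAD = {}")
    case True then show ?thesis by (simp add: N_def)
  next
    case False
    then have NB: "N \<in> BAD" unfolding N_def using fin by (simp add: Max_in)
    then have N1: "N \<ge> 1" and bN: "bs N \<noteq> bstar" unfolding BAD_def by auto
    obtain m where m: "N = Suc m" using N1 by (cases N) auto
    have "of_nat N \<le> of_nat (Suc m) * g (Suc m)"
      using bad[OF N1 bN] m by (metis mult.right_neutral mult_left_mono zero_le)
    also have "\<dots> \<le> (\<Sum>m. of_nat (Suc m) * g (Suc m))"
      by (rule ennreal_term_le_suminf[where f="\<lambda>m. of_nat (Suc m) * g (Suc m)"])
    finally have "of_nat N \<le> (\<Sum>m. of_nat (Suc m) * g (Suc m))" .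
    then have "1 + of_nat N \<le> 1 + (\<Sum>m. of_nat (Suc m) * g (Suc m))" by (rule add_left_mono)
    then show ?thesis by (simp add: ennreal_of_nat_eq_real_of_nat[symmetric] add.commute)
  qed
  finally show ?thesis .
next
  case False
  have "(\<Sum>m. of_nat (Suc m) * g (Suc m)) = \<top>"
  proof (rule ennreal_unbounded_top)
    fix k
    obtain n where n: "n \<in> {n. n \<ge> 1 \<and> bs n \<noteq> bstar}" "k < n"
      using False by (meson infinite_nat_iff_unbounded)
    then have n1: "n \<ge> 1" and bn: "bs n \<noteq> bstar" by auto
    obtain m where m: "n = Suc m" using n1 by (cases n) auto
    have "of_nat k \<le> (of_nat n :: ennreal)" using n by simp
    also have "\<dots> \<le> of_nat (Suc m) * g (Suc m)"
      using bad[OF n1 bn] m by (metis mult.right_neutral mult_left_mono zero_le)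
    also have "\<dots> \<le> (\<Sum>m. of_nat (Suc m) * g (Suc m))"
      by (rule ennreal_term_le_suminf[where f="\<lambda>m. of_nat (Suc m) * g (Suc m)"])
    finally show "of_nat k \<le> (\<Sum>m. of_nat (Suc m) * g (Suc m))" .
  qed
  then show ?thesis by simp
qed


theorem theorem3:
  fixes Acts :: "'s::finite \<Rightarrow> 'a::finite set"
    and P :: "'s \<Rightarrow> 'a \<Rightarrow> 's \<Rightarrow> real"
    and M :: "'w measure" and N :: "'x measure"
    and X :: "nat \<Rightarrow> 'w \<Rightarrow> 'x"
    and f :: "'s \<Rightarrow> 'a \<Rightarrow> 'x \<Rightarrow> real"
    and bstar :: "'s \<Rightarrow> 'a"
    and beta :: "nat \<Rightarrow> 'w \<Rightarrow> 's \<Rightarrow> 'a"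
  assumes acts_ne: "\<And>s. Acts s \<noteq> {}"
    and P_nonneg: "\<And>s a s'. a \<in> Acts s \<Longrightarrow> P s a s' \<ge> 0"
    and P_sum: "\<And>s a. a \<in> Acts s \<Longrightarrow> (\<Sum>s'\<in>UNIV. P s a s') = 1"
    and ergodic: "\<And>\<beta>. admissible Acts \<beta> \<Longrightarrow>
        irreducible_chain (pol_mat P \<beta>) \<and> aperiodic_chain (pol_mat P \<beta>)"
    and prob: "prob_space M"
    and X_meas: "\<And>t. X t \<in> measurable M N"
    and X_indep: "prob_space.indep_vars M (\<lambda>_. N) X UNIV"
    and X_ident: "\<And>t. distr M N (X t) = distr M N (X 0)"
    and f_meas: "\<And>s a. a \<in> Acts s \<Longrightarrow> f s a \<in> borel_measurable N"
    and f_bdd: "\<And>s a. a \<in> Acts s \<Longrightarrow>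
        bdd_above (f s a ` space N) \<and> bdd_below (f s a ` space N)"
    and bstar_adm: "admissible Acts bstar"
    and bstar_opt: "\<And>\<beta>. admissible Acts \<beta> \<Longrightarrow>
        rho P \<beta> (\<lambda>s a. prob_space.expectation M (\<lambda>\<omega>. f s a (X 0 \<omega>)))
        \<le> rho P bstar (\<lambda>s a. prob_space.expectation M (\<lambda>\<omega>. f s a (X 0 \<omega>)))"
    and gap: "\<And>\<beta>. admissible Acts \<beta> \<Longrightarrow> \<beta> \<noteq> bstar \<Longrightarrow>
        rho P \<beta> (\<lambda>s a. prob_space.expectation M (\<lambda>\<omega>. f s a (X 0 \<omega>)))
        < rho P bstar (\<lambda>s a. prob_space.expectation M (\<lambda>\<omega>. f s a (X 0 \<omega>)))"
    and lpsm: "\<And>n \<omega>. n \<ge> 1 \<Longrightarrow> \<omega> \<in> space M \<Longrightarrow>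
        lpsm_choice Acts P (emp_mean f (\<lambda>k. X k \<omega>) n) (beta n \<omega>)"
  shows "(\<integral>\<^sup>+ \<omega>. first_stable (\<lambda>t. beta t \<omega>) bstar \<partial>M) < \<infinity>"
proof -
  interpret prob_space M by (rule prob)
  interpret mdp Acts P bstar
    by unfold_locales (use P_nonneg P_sum ergodic bstar_adm in auto)
  define \<mu> where "\<mu> = (\<lambda>s a. expectation (\<lambda>\<omega>. f s a (X 0 \<omega>)))"
  have gap': "\<And>\<beta>. admissible Acts \<beta> \<Longrightarrow> \<beta> \<noteq> bstar \<Longrightarrow> rho P \<beta> \<mu> < rho P bstar \<mu>"
    using gap unfolding \<mu>_def by blast
  obtain \<epsilon> where \<epsilon>0: "\<epsilon> > 0" and stab: "\<forall>\<Theta> \<beta>. (\<forall>s. \<forall>a\<in>Acts s. \<bar>\<Theta> s a - \<mu> s a\<bar> \<le> \<epsilon>) \<longrightarrow>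
            lpsm_choice Acts P \<Theta> \<beta> \<longrightarrow> \<beta> = bstar"
    using lp_stable[OF gap'] by blast
  define wid where "wid = (\<lambda>(s,a). if a \<in> Acts s then Sup (f s a ` space N) - Inf (f s a ` space N) else 0)"
  obtain Kw where Kw0: "Kw \<ge> 0" and Kw: "\<And>p. \<bar>wid p\<bar> \<le> Kw"
    using fin_bound[of wid] by blast
  define W where "W = Kw + 1"
  have W0: "W > 0" using Kw0 unfolding W_def by simp
  define lo where "lo s a = Inf (f s a ` space N)" for s a
  have frange: "f s a x \<in> {lo s a .. lo s a + W}" if a: "a \<in> Acts s" and x: "x \<in> space N" for s a x
  proof -
    have ab: "bdd_above (f s a ` space N)" "bdd_below (f s a ` space N)" using f_bdd[OF a] by auto
    have "x' \<in> space N \<Longrightarrow> Inf (f s a ` space N) \<le> f s a x'" for x'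
      by (rule cInf_lower) (use ab in auto)
    moreover have "x' \<in> space N \<Longrightarrow> f s a x' \<le> Sup (f s a ` space N)" for x'
      by (rule cSup_upper) (use ab in auto)
    moreover have "\<bar>wid (s,a)\<bar> \<le> Kw" by (rule Kw)
    ultimately show ?thesis using x a unfolding lo_def W_def wid_def by force
  qed
  define B where "B n s a = {\<omega> \<in> space M. real n * \<epsilon> \<le> \<bar>(\<Sum>i\<in>{..<n}. f s a (X i \<omega>)) - real (card {..<n}) * \<mu> s a\<bar>}" for n s a
  note [measurable] = X_meas
  have Bsets: "B n s a \<in> sets M" if a: "a \<in> Acts s" for n s a
  proof -
    note [measurable] = f_meas[OF a]
    show ?thesis unfolding B_def by measurable
  qed
  define c where "c = 2 * \<epsilon>\<^sup>2 / W\<^sup>2"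
  have c0: "c > 0" unfolding c_def using \<epsilon>0 W0 by simp
  have Hbound: "prob (B n s a) \<le> 2 * exp (- c * real n)" if a: "a \<in> Acts s" and n: "n \<ge> 1" for n s a
  proof -
    note [measurable] = f_meas[OF a]
    have ind: "indep_vars (\<lambda>_. N) X {..<n}" by (rule indep_vars_subset[OF X_indep]) auto
    interpret H: Hoeffding_ineq_iid M "{..<n}" "\<lambda>i \<omega>. f s a (X i \<omega>)" "\<lambda>\<omega>. f s a (X 0 \<omega>)"
      "lo s a" "lo s a + W" "\<mu> s a"
    proof unfold_locales
      show "finite {..<n}" by simp
      show "indep_vars (\<lambda>_. borel) (\<lambda>i \<omega>. f s a (X i \<omega>)) {..<n}"
        by (rule indep_vars_compose2[OF ind]) (rule f_meas[OF a])
      fix i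
      have "distr M borel (\<lambda>\<omega>. f s a (X i \<omega>)) = distr (distr M N (X i)) borel (f s a)"
        using distr_distr[OF f_meas[OF a] X_meas[of i]] by (simp add: comp_def)
      also have "\<dots> = distr (distr M N (X 0)) borel (f s a)" by (simp only: X_ident[of i])
      also have "\<dots> = distr M borel (\<lambda>\<omega>. f s a (X 0 \<omega>))"
        using distr_distr[OF f_meas[OF a] X_meas[of 0]] by (simp add: comp_def)
      finally show "distr M borel (\<lambda>\<omega>. f s a (X i \<omega>)) = distr M borel (\<lambda>\<omega>. f s a (X 0 \<omega>))" .
    next
      show "random_variable borel (\<lambda>\<omega>. f s a (X 0 \<omega>))" by measurable
      show "AE x in M. f s a (X 0 x) \<in> {lo s a..lo s a + W}"
        by (rule AE_I2) (use frange[OF a] measurable_space[OF X_meas] in blast)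
      show "\<mu> s a \<equiv> expectation (\<lambda>\<omega>. f s a (X 0 \<omega>))" unfolding \<mu>_def by simp
    qed
    have "prob {x\<in>space M. \<bar>(\<Sum>i\<in>{..<n}. f s a (X i x)) - real (card {..<n}) * \<mu> s a\<bar> \<ge> real n * \<epsilon>}
          \<le> 2 * exp (-2 * (real n * \<epsilon>)\<^sup>2 / (real (card {..<n}) * (lo s a + W - lo s a)\<^sup>2))"
      by (rule H.Hoeffding_ineq_abs_ge) (use \<epsilon>0 W0 n in \<open>auto simp: lessThan_empty_iff\<close>)
    moreover have "-2 * (real n * \<epsilon>)\<^sup>2 / (real (card {..<n}) * (lo s a + W - lo s a)\<^sup>2) = - c * real n"
      using n W0 unfolding c_def by (simp add: field_simps power2_eq_square)
    ultimately show ?thesis unfolding B_def by simp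
  qed
  have goodev: "beta n \<omega> = bstar" if \<omega>: "\<omega> \<in> space M" and n: "n \<ge> 1"
    and nB: "\<forall>s. \<forall>a\<in>Acts s. \<omega> \<notin> B n s a" for n \<omega>
  proof -
    have "\<bar>emp_mean f (\<lambda>k. X k \<omega>) n s a - \<mu> s a\<bar> \<le> \<epsilon>" if a: "a \<in> Acts s" for s a
    proof -
      have lt: "\<bar>(\<Sum>i\<in>{..<n}. f s a (X i \<omega>)) - real n * \<mu> s a\<bar> < real n * \<epsilon>"
        using nB a \<omega> unfolding B_def by (force simp: not_le)
      have "emp_mean f (\<lambda>k. X k \<omega>) n s a - \<mu> s a = ((\<Sum>i\<in>{..<n}. f s a (X i \<omega>)) - real n * \<mu> s a) / real n"
        using n by (simp add: emp_mean_def field_simps)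
      then have "\<bar>emp_mean f (\<lambda>k. X k \<omega>) n s a - \<mu> s a\<bar> = \<bar>(\<Sum>i\<in>{..<n}. f s a (X i \<omega>)) - real n * \<mu> s a\<bar> / real n"
        by simp
      also have "\<dots> < \<epsilon>" using lt n by (simp add: divide_less_eq mult.commute)
      finally show ?thesis by simp
    qed
    then show ?thesis using stab lpsm[OF n \<omega>] by blast
  qed
  define SA where "SA = {p::'s \<times> 'a. snd p \<in> Acts (fst p)}"
  have finSA: "finite SA" by simp
  define g where "g n \<omega> = (\<Sum>p\<in>SA. indicator (B n (fst p) (snd p)) \<omega> :: ennreal)" for n \<omega>
  have gmeas: "g n \<in> borel_measurable M" for n
    unfolding g_def by (intro borel_measurable_sum borel_measurable_indicator) (auto simp: SA_def Bsets)
  have pw: "first_stable (\<lambda>t. beta t \<omega>) bstar \<le> 1 + (\<Sum>m. of_nat (Suc m) * g (Suc m) \<omega>)"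
    if \<omega>: "\<omega> \<in> space M" for \<omega>
  proof (rule fs_bound)
    fix n assume n: "n \<ge> 1" and bn: "beta n \<omega> \<noteq> bstar"
    then obtain s a where a: "a \<in> Acts s" and inB: "\<omega> \<in> B n s a" using goodev[OF \<omega> n] by blast
    have "(1::ennreal) = indicator (B n (fst (s,a)) (snd (s,a))) \<omega>" using inB by simp
    also have "\<dots> \<le> g n \<omega>" unfolding g_def by (rule member_le_sum) (use a in \<open>auto simp: SA_def\<close>)
    finally show "g n \<omega> \<ge> 1" .
  qed
  have intg: "(\<integral>\<^sup>+ \<omega>. g n \<omega> \<partial>M) \<le> ennreal (real (card SA) * (2 * exp (- c * real n)))" if n: "n \<ge> 1" for n
  proof -
    have "(\<integral>\<^sup>+ \<omega>. g n \<omega> \<partial>M) = (\<Sum>p\<in>SA. emeasure M (B n (fst p) (snd p)))"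
      unfolding g_def by (subst nn_integral_sum) (auto simp: SA_def Bsets nn_integral_indicator intro!: borel_measurable_indicator)
    also have "\<dots> \<le> (\<Sum>p\<in>SA. ennreal (2 * exp (- c * real n)))"
    proof (rule sum_mono)
      fix p assume "p \<in> SA"
      then have a: "snd p \<in> Acts (fst p)" by (simp add: SA_def)
      show "emeasure M (B n (fst p) (snd p)) \<le> ennreal (2 * exp (- c * real n))"
        using Hbound[OF a n] by (simp add: emeasure_eq_measure)
    qed
    also have "\<dots> = ennreal (real (card SA) * (2 * exp (- c * real n)))"
      by (simp add: ennreal_of_nat_eq_real_of_nat ennreal_mult)
    finally show ?thesis .
  qed
  define C where "C = real (card SA) * 2"
  have C0: "C \<ge> 0" unfolding C_def by simp
  have summ: "summable (\<lambda>m. real (Suc m) * (C * exp (- c * real (Suc m))))"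
  proof -
    have "summable (\<lambda>n. real n * exp (- c * real n))" by (rule summable_lin_exp[OF c0])
    then have "summable (\<lambda>m. real (Suc m) * exp (- c * real (Suc m)))"
      by (subst summable_Suc_iff)
    then have "summable (\<lambda>m. C * (real (Suc m) * exp (- c * real (Suc m))))" by (rule summable_mult)
    then show ?thesis by (simp add: mult.left_commute)
  qed
  have "(\<integral>\<^sup>+ \<omega>. (\<Sum>m. of_nat (Suc m) * g (Suc m) \<omega>) \<partial>M)
        = (\<Sum>m. of_nat (Suc m) * (\<integral>\<^sup>+ \<omega>. g (Suc m) \<omega> \<partial>M))"
  proof -
    have gm2: "(\<lambda>\<omega>. of_nat (Suc m) * g (Suc m) \<omega>) \<in> borel_measurable M" for m
      using gmeas[of "Suc m"] by measurable
    have "(\<integral>\<^sup>+ \<omega>. (\<Sum>m. of_nat (Suc m) * g (Suc m) \<omega>) \<partial>M)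
        = (\<Sum>m. (\<integral>\<^sup>+ \<omega>. of_nat (Suc m) * g (Suc m) \<omega> \<partial>M))"
      by (rule nn_integral_suminf[OF gm2])
    also have "\<dots> = (\<Sum>m. of_nat (Suc m) * (\<integral>\<^sup>+ \<omega>. g (Suc m) \<omega> \<partial>M))"
      by (rule suminf_cong, rule nn_integral_cmult[OF gmeas])
    finally show ?thesis .
  qed
  also have "\<dots> \<le> (\<Sum>m. ennreal (real (Suc m) * (C * exp (- c * real (Suc m)))))"
  proof (rule suminf_le)
    fix m
    have "of_nat (Suc m) * (\<integral>\<^sup>+ \<omega>. g (Suc m) \<omega> \<partial>M)
          \<le> of_nat (Suc m) * ennreal (real (card SA) * (2 * exp (- c * real (Suc m))))"
      by (rule mult_left_mono[OF intg]) auto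
    also have "\<dots> = ennreal (real (Suc m) * (C * exp (- c * real (Suc m))))"
      unfolding C_def by (simp add: ennreal_of_nat_eq_real_of_nat[symmetric] ennreal_mult' mult.assoc)
    finally show "of_nat (Suc m) * (\<integral>\<^sup>+ \<omega>. g (Suc m) \<omega> \<partial>M)
          \<le> ennreal (real (Suc m) * (C * exp (- c * real (Suc m))))" .
  qed auto
  also have "(\<Sum>m. ennreal (real (Suc m) * (C * exp (- c * real (Suc m)))))
        = ennreal (\<Sum>m. real (Suc m) * (C * exp (- c * real (Suc m))))"
    by (rule suminf_ennreal2[OF _ summ]) (use C0 in simp)
  finally have sumb: "(\<integral>\<^sup>+ \<omega>. (\<Sum>m. of_nat (Suc m) * g (Suc m) \<omega>) \<partial>M)
      \<le> ennreal (\<Sum>m. real (Suc m) * (C * exp (- c * real (Suc m))))" .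
  have "(\<integral>\<^sup>+ \<omega>. first_stable (\<lambda>t. beta t \<omega>) bstar \<partial>M)
        \<le> (\<integral>\<^sup>+ \<omega>. (1 + (\<Sum>m. of_nat (Suc m) * g (Suc m) \<omega>)) \<partial>M)"
    by (rule nn_integral_mono) (rule pw)
  also have "\<dots> = (\<integral>\<^sup>+ \<omega>. 1 \<partial>M) + (\<integral>\<^sup>+ \<omega>. (\<Sum>m. of_nat (Suc m) * g (Suc m) \<omega>) \<partial>M)"
    by (rule nn_integral_add) (use gmeas in measurable)
  also have "\<dots> \<le> 1 + ennreal (\<Sum>m. real (Suc m) * (C * exp (- c * real (Suc m))))"
    using sumb by (simp add: emeasure_space_1 add_left_mono)
  also have "\<dots> < \<infinity>" by (simp add: ennreal_add_less_top)
  finally show ?thesis .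
qed

end
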